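(* In the triangle $ABC$ with $a=1$ and $b=c=\sqrt{2+\sqrt3}$, the triangle centers $X_5$ and $X_{15}$ coincide.
   Context: $X_n$ denotes the $n$-th triangle center listed in Kimberling's Encyclopedia of Triangle Centers (ETC) ($X_5$ the nine-point center, $X_{15}$ the first isodynamic point), with $a=BC$, $b=CA$, $c=AB$. *)

theory Defs
  imports Complex_Main
begin

text \<open>Points of the Euclidean plane are modelled as complex numbers.
  Side lengths: a = |BC|, b = |CA|, c = |AB|.\<close>

text \<open>Interior angle opposite the side of length a (law of cosines).\<close>
definition tri_angle :: "real \<Rightarrow> real \<Rightarrow> real \<Rightarrow> real" where
  "tri_angle a b c = arccos ((b^2 + c^2 - a^2) / (2 * b * c))"

text \<open>The point with (actual, up to scaling) trilinear coordinates x : y : z,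
  i.e. barycentric coordinates a x : b y : c z.\<close>
definition from_trilinear ::
  "complex \<Rightarrow> complex \<Rightarrow> complex \<Rightarrow> real \<Rightarrow> real \<Rightarrow> real \<Rightarrow> real \<Rightarrow> real \<Rightarrow> real \<Rightarrow> complex" where
  "from_trilinear A B C a b c x y z =
     (1 / (a*x + b*y + c*z)) *\<^sub>R ((a*x) *\<^sub>R A + (b*y) *\<^sub>R B + (c*z) *\<^sub>R C)"

text \<open>ETC X(5), nine-point center: trilinears cos(B - C) : cos(C - A) : cos(A - B).\<close>
definition X5 :: "complex \<Rightarrow> complex \<Rightarrow> complex \<Rightarrow> complex" where
  "X5 A B C =
     (let a = dist B C; b = dist C A; c = dist A B;
          \<alpha> = tri_angle a b c; \<beta> = tri_angle b c a; \<gamma> = tri_angle c a b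
      in from_trilinear A B C a b c (cos (\<beta> - \<gamma>)) (cos (\<gamma> - \<alpha>)) (cos (\<alpha> - \<beta>)))"

text \<open>ETC X(15), first isodynamic point: trilinears
  sin(A + pi/3) : sin(B + pi/3) : sin(C + pi/3).\<close>
definition X15 :: "complex \<Rightarrow> complex \<Rightarrow> complex \<Rightarrow> complex" where
  "X15 A B C =
     (let a = dist B C; b = dist C A; c = dist A B;
          \<alpha> = tri_angle a b c; \<beta> = tri_angle b c a; \<gamma> = tri_angle c a b
      in from_trilinear A B C a b c (sin (\<alpha> + pi/3)) (sin (\<beta> + pi/3)) (sin (\<gamma> + pi/3)))"

end

theory Submission
  imports Defs
begin

theorem theorem3p3:
  fixes A B C :: complex
  assumes "dist B C = 1"
    and "dist C A = sqrt (2 + sqrt 3)"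
    and "dist A B = sqrt (2 + sqrt 3)"
  shows "X5 A B C = X15 A B C"
proof -
  define s where "s = sqrt (2 + sqrt 3)"
  have s2: "s^2 = 2 + sqrt 3" unfolding s_def
    by (simp add: add_nonneg_nonneg)
  have s0: "s > 0" unfolding s_def by (simp add: add_pos_nonneg)
  have r3: "sqrt 3 * sqrt 3 = (3::real)" by simp
  have q: "(s^2 + s^2 - 1^2) / (2 * s * s) = sqrt 3 / 2"
  proof -
    have "2*s*s = 2*s^2" by (simp add: power2_eq_square)
    moreover have "4 + 2 * sqrt 3 > (0::real)" by (simp add: add_pos_nonneg)
    moreover have "(6 + sqrt 3 * 4) = sqrt 3 * (4 + 2 * sqrt (3::real))"
      using r3 by (simp add: algebra_simps)
    ultimately show ?thesis using s2 s0
      by (simp add: field_simps)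
  qed
  have al: "tri_angle 1 s s = pi/6"
    unfolding tri_angle_def q
    using arccos_cos[of "pi/6"] by (simp add: cos_30)
  have be: "tri_angle s s 1 = tri_angle s 1 s"
    unfolding tri_angle_def by (simp add: algebra_simps)
  have key: "cos (x - pi/6) = sin (x + pi/3)" for x :: real
  proof -
    have "sin (x + pi/3) = cos (pi/2 - (x + pi/3))" by (simp add: cos_sin_eq add.commute)
    also have "pi/2 - (x + pi/3) = -(x - pi/6)" by simp
    finally show ?thesis by (metis cos_minus minus_diff_eq)
  qed
  have k1: "sin (pi/6 + pi/3) = 1"
  proof -
    have "pi/6 + pi/3 = pi/2" by simp
    then show ?thesis by simp
  qed
  have k2: "cos (x - y) = cos (y - x)" for x y :: real
    by (metis cos_minus minus_diff_eq)
  show ?thesis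
    unfolding X5_def X15_def Let_def assms s_def[symmetric] al be
    using key k1 k2 by simp
qed

end
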